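(* Let $q\geq r$ be positive integers with $r>\frac{2q}{3}$. Then $F_{q,r}(n)=G_{q,r}(n)$ for every positive integer $n$.
   Context: $[n]=\{1,\dots,n\}$. For $x,y\in\mathbb{R}^q$, write $x<_r y$ if there are at least $r$ coordinates $i\in[q]$ with $x_i<y_i$. $F_{q,r}(n)$ is the maximum $N$ such that there exist $x_1,\dots,x_N\in[n]^q$ with $x_a<_r x_b$ for all $1\leq a<b\leq N$. $G_{q,r}(n)$ is the maximum size of a set $S\subseteq[n]^q$ such that for all distinct $x,y\in S$, either $x<_r y$ or $y<_r x$. *)

theory Defs
  imports Complex_Main
begin

text \<open>Points of [n]^q are lists of length q with entries in {1..n};
  coordinate i of [q] corresponds to list index i-1.\<close>

definition cube :: "nat \<Rightarrow> nat \<Rightarrow> nat list set" where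
  "cube n q = {xs. length xs = q \<and> set xs \<subseteq> {1..n}}"

definition less_r :: "nat \<Rightarrow> nat \<Rightarrow> nat list \<Rightarrow> nat list \<Rightarrow> bool" where
  "less_r q r x y \<longleftrightarrow> r \<le> card {i. i < q \<and> x ! i < y ! i}"

definition F :: "nat \<Rightarrow> nat \<Rightarrow> nat \<Rightarrow> nat" where
  "F q r n = Max {N. \<exists>x :: nat \<Rightarrow> nat list.
      (\<forall>a \<in> {1..N}. x a \<in> cube n q) \<and>
      (\<forall>a \<in> {1..N}. \<forall>b \<in> {1..N}. a < b \<longrightarrow> less_r q r (x a) (x b))}"

definition G :: "nat \<Rightarrow> nat \<Rightarrow> nat \<Rightarrow> nat" where
  "G q r n = Max {card S | S. S \<subseteq> cube n q \<and>
      (\<forall>x \<in> S. \<forall>y \<in> S. x \<noteq> y \<longrightarrow> less_r q r x y \<or> less_r q r y x)}"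

end

theory Submission
  imports Defs
begin

lemma three_sets:
  fixes A B C :: "nat set"
  assumes "A \<subseteq> {..<q}" "B \<subseteq> {..<q}" "C \<subseteq> {..<q}" "A \<inter> B \<inter> C = {}"
  shows "card A + card B + card C \<le> 2 * q"
proof -
  have f: "finite A" "finite B" "finite C" using assms finite_subset by blast+
  have 1: "card A + card B = card (A \<union> B) + card (A \<inter> B)"
    by (rule card_Un_Int[OF f(1) f(2)])
  have fab: "finite (A \<inter> B)" using f(1) by blast
  have 2: "card (A \<inter> B) + card C = card ((A \<inter> B) \<union> C) + card (A \<inter> B \<inter> C)"
    by (rule card_Un_Int[OF fab f(3)])
  have s3: "A \<union> B \<subseteq> {..<q}" using assms(1,2) by blast
  have 3: "card (A \<union> B) \<le> q"
    using card_mono[OF finite_lessThan s3] by simp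
  have s4: "(A \<inter> B) \<union> C \<subseteq> {..<q}" using assms(1,3) by blast
  have 4: "card ((A \<inter> B) \<union> C) \<le> q"
    using card_mono[OF finite_lessThan s4] by simp
  have 5: "card (A \<inter> B \<inter> C) = 0" using assms(4) by simp
  show ?thesis using 1 2 3 4 5 by linarith
qed

lemma less_r_irrefl: "0 < r \<Longrightarrow> \<not> less_r q r x x"
  unfolding less_r_def by simp

lemma less_r_antisym:
  assumes "q < 2 * r" "less_r q r x y" "less_r q r y x"
  shows False
proof -
  let ?A = "{i. i < q \<and> x ! i < y ! i}"
  let ?B = "{i. i < q \<and> y ! i < x ! i}"
  have "card ?A + card ?B \<le> q"
  proof -
    have "card ?A + card ?B = card (?A \<union> ?B)"
      by (rule card_Un_disjoint[symmetric]) auto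
    moreover have s: "?A \<union> ?B \<subseteq> {..<q}" by blast
    ultimately show ?thesis using card_mono[OF finite_lessThan s] by simp
  qed
  then show False using assms unfolding less_r_def by linarith
qed

lemma less_r_no_cycle:
  assumes "2 * q < 3 * r" "less_r q r x y" "less_r q r y z" "less_r q r z x"
  shows False
proof -
  let ?A = "{i. i < q \<and> x ! i < y ! i}"
  let ?B = "{i. i < q \<and> y ! i < z ! i}"
  let ?C = "{i. i < q \<and> z ! i < x ! i}"
  have "card ?A + card ?B + card ?C \<le> 2 * q"
    by (rule three_sets) auto
  then show False using assms unfolding less_r_def by linarith
qed

lemma enum_order:
  fixes R :: "'a \<Rightarrow> 'a \<Rightarrow> bool"
  assumes fin: "finite S"
    and irr: "\<forall>x\<in>S. \<not> R x x"
    and tr: "\<forall>x\<in>S. \<forall>y\<in>S. \<forall>z\<in>S. R x y \<longrightarrow> R y z \<longrightarrow> R x z"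
    and tot: "\<forall>x\<in>S. \<forall>y\<in>S. x \<noteq> y \<longrightarrow> R x y \<or> R y x"
  shows "\<exists>f. (\<forall>a\<in>{1..card S}. f a \<in> S) \<and>
     (\<forall>a\<in>{1..card S}. \<forall>b\<in>{1..card S}. a < b \<longrightarrow> R (f a) (f b))"
proof -
  define h where "h x = card {y\<in>S. R y x}" for x
  have mono: "h x < h y" if "x \<in> S" "y \<in> S" "R x y" for x y
  proof -
    have "{z\<in>S. R z x} \<subset> {z\<in>S. R z y}"
      using that tr irr by blast
    then show ?thesis unfolding h_def using fin
      by (simp add: psubset_card_mono)
  qed
  have inj: "inj_on h S"
  proof (rule inj_onI)
    fix x y assume "x \<in> S" "y \<in> S" "h x = h y"
    then show "x = y" using tot mono by (metis less_irrefl)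
  qed
  have bound: "h x < card S" if "x \<in> S" for x
  proof -
    have "{z\<in>S. R z x} \<subset> S" using that irr by blast
    then show ?thesis unfolding h_def using fin by (simp add: psubset_card_mono)
  qed
  have img: "h ` S = {..<card S}"
  proof (rule card_subset_eq)
    show "finite {..<card S}" by simp
    show "h ` S \<subseteq> {..<card S}" using bound by auto
    show "card (h ` S) = card {..<card S}" using card_image[OF inj] by simp
  qed
  define f where "f a = inv_into S h (a - 1)" for a
  have fS: "f a \<in> S" "h (f a) = a - 1" if "a \<in> {1..card S}" for a
  proof -
    have "a - 1 \<in> h ` S" using img that by auto
    then show "f a \<in> S" "h (f a) = a - 1" unfolding f_def
      by (auto simp: inv_into_into f_inv_into_f)
  qed
  show ?thesis
  proof (intro exI conjI ballI impI)
    fix a assume "a \<in> {1..card S}" then show "f a \<in> S" using fS by blast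
  next
    fix a b assume ab: "a \<in> {1..card S}" "b \<in> {1..card S}" "a < b"
    then have ne: "f a \<noteq> f b" using fS[OF ab(1)] fS[OF ab(2)] by auto
    show "R (f a) (f b)"
    proof (rule ccontr)
      assume "\<not> R (f a) (f b)"
      then have "R (f b) (f a)" using tot ne fS ab by blast
      then have "h (f b) < h (f a)" using mono fS ab by blast
      then show False using fS[OF ab(1)] fS[OF ab(2)] ab by auto
    qed
  qed
qed

lemma finite_cube: "finite (cube n q)"
proof -
  have "cube n q = {xs. set xs \<subseteq> {1..n} \<and> length xs = q}"
    unfolding cube_def by auto
  then show ?thesis using finite_lists_length_eq[of "{1..n}" q] by simp
qed

theorem proposition1p3:
  fixes q r n :: nat
  assumes "0 < r" and "r \<le> q" and "real r > 2 * real q / 3" and "0 < n"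
  shows "F q r n = G q r n"
proof -
  have r3: "2 * q < 3 * r" using assms(3) by linarith
  then have r2: "q < 2 * r" by linarith
  let ?SF = "{N. \<exists>x :: nat \<Rightarrow> nat list.
      (\<forall>a \<in> {1..N}. x a \<in> cube n q) \<and>
      (\<forall>a \<in> {1..N}. \<forall>b \<in> {1..N}. a < b \<longrightarrow> less_r q r (x a) (x b))}"
  let ?SG = "{card S | S. S \<subseteq> cube n q \<and>
      (\<forall>x \<in> S. \<forall>y \<in> S. x \<noteq> y \<longrightarrow> less_r q r x y \<or> less_r q r y x)}"
  have "?SF \<subseteq> ?SG"
  proof
    fix N assume "N \<in> ?SF"
    then obtain x where x1: "\<forall>a \<in> {1..N}. x a \<in> cube n q"
      and x2: "\<forall>a \<in> {1..N}. \<forall>b \<in> {1..N}. a < b \<longrightarrow> less_r q r (x a) (x b)" by blast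
    have inj: "inj_on x {1..N}"
    proof (rule inj_onI)
      fix a b assume ab: "a \<in> {1..N}" "b \<in> {1..N}" "x a = x b"
      show "a = b"
      proof (rule ccontr)
        assume "a \<noteq> b"
        then have "a < b \<or> b < a" by linarith
        then have "less_r q r (x a) (x b) \<or> less_r q r (x b) (x a)" using x2 ab(1,2) by blast
        then have "less_r q r (x a) (x a)" using ab(3) by simp
        then show False using less_r_irrefl assms(1) by blast
      qed
    qed
    have "card (x ` {1..N}) = N" using card_image[OF inj] by simp
    moreover have "x ` {1..N} \<subseteq> cube n q" using x1 by auto
    moreover have "\<forall>u \<in> x ` {1..N}. \<forall>v \<in> x ` {1..N}. u \<noteq> v \<longrightarrow> less_r q r u v \<or> less_r q r v u"
    proof (intro ballI impI)
      fix u v assume "u \<in> x ` {1..N}" "v \<in> x ` {1..N}" "u \<noteq> v"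
      then obtain a b where "a \<in> {1..N}" "b \<in> {1..N}" "u = x a" "v = x b" "a \<noteq> b" by blast
      then show "less_r q r u v \<or> less_r q r v u" using x2
        by (cases "a < b") auto
    qed
    ultimately show "N \<in> ?SG" by (intro CollectI exI[of _ "x ` {1..N}"]) simp
  qed
  moreover have "?SG \<subseteq> ?SF"
  proof
    fix N assume "N \<in> ?SG"
    then obtain S where S: "N = card S" "S \<subseteq> cube n q"
      "\<forall>x \<in> S. \<forall>y \<in> S. x \<noteq> y \<longrightarrow> less_r q r x y \<or> less_r q r y x" by blast
    have fin: "finite S" using S(2) finite_cube finite_subset by blast
    have irr: "\<forall>x\<in>S. \<not> less_r q r x x" using less_r_irrefl assms(1) by blast
    have tr: "\<forall>x\<in>S. \<forall>y\<in>S. \<forall>z\<in>S. less_r q r x y \<longrightarrow> less_r q r y z \<longrightarrow> less_r q r x z"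
    proof (intro ballI impI)
      fix x y z assume xyz: "x \<in> S" "y \<in> S" "z \<in> S" "less_r q r x y" "less_r q r y z"
      show "less_r q r x z"
      proof (cases "x = z")
        case True
        then show ?thesis using xyz(4,5) less_r_antisym[OF r2] by blast
      next
        case False
        then have "less_r q r x z \<or> less_r q r z x" using xyz(1,3) S(3) by blast
        then show ?thesis using xyz(4,5) less_r_no_cycle[OF r3] by blast
      qed
    qed
    obtain f where "\<forall>a\<in>{1..card S}. f a \<in> S"
      "\<forall>a\<in>{1..card S}. \<forall>b\<in>{1..card S}. a < b \<longrightarrow> less_r q r (f a) (f b)"
      using enum_order[OF fin irr tr S(3)] by blast
    then show "N \<in> ?SF" using S(1,2) by (intro CollectI exI[of _ f]) blast
  qed
  ultimately have "?SF = ?SG" by blast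
  then show ?thesis unfolding F_def G_def by simp
qed

end
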